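(* Let $(A,\mathcal H)$ be a left Hopf algebroid such that ${}_s\mathcal H$ is $A$-flat. Let $B$ be a right $\mathcal H$-comodule $A^o$-subring of $\mathcal H$ via $t$, with inclusion $\iota$, such that for every $b\in B$, $\beta^{-1}(\iota(b)\otimes_A1)=\sum_i\iota(b_i)\otimes_{A^o}h_i$ for some $\sum_ib_i\otimes_{A^o}h_i\in B\otimes_{A^o}\mathcal H$. Then the map $\mathcal H\otimes_B\mathcal H\to(\mathcal H/\mathcal HB^+)\otimes_A\mathcal H$, $x\otimes_By\mapsto\sum\pi(x_1)\otimes_Ax_2y$ (with $\pi:\mathcal H\to\mathcal H/\mathcal HB^+$ the projection) is well-defined and is an isomorphism.
   Context: $\Bbbk$ is a field. A left bialgebroid $(A,\mathcal H)$: $\Bbbk$-algebras $A,\mathcal H$, algebra maps $s:A\to\mathcal H$, $t:A^o\to\mathcal H$ with commuting images, $A$-bilinear $\Delta:\mathcal H\to\mathcal H\otimes_A\mathcal H$, $\varepsilon:\mathcal H\to A$ (bimodule structure $a\cdot h\cdot b=s(a)t(b)h$; $\mathcal H\otimes_A\mathcal H$ = quotient of $\mathcal H\otimes\mathcal H$ by span of $t(a)x\otimes y-x\otimes s(a)y$), with $(\mathcal H,\Delta,\varepsilon)$ a coassociative counital $A$-coring, $\Delta$ an algebra map into the Takeuchi product $\{\sum x_i\otimes_Ay_i:\sum x_it(a)\otimes_Ay_i=\sum x_i\otimes_Ay_is(a)\ \forall a\}$, $\varepsilon(xs(\varepsilon(y)))=\varepsilon(xy)=\varepsilon(xt(\varepsilon(y)))$,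 $\varepsilon(1)=1$; $\Delta(x)=\sum x_1\otimes_Ax_2$, $\mathcal H^+=\ker\varepsilon$, $B^+=B\cap\mathcal H^+$. Left Hopf algebroid: $\beta:\mathcal H\otimes_{A^o}\mathcal H\to\mathcal H\otimes_A\mathcal H$, $x\otimes_{A^o}y\mapsto\sum x_1\otimes_Ax_2y$ is bijective, where $\mathcal H\otimes_{A^o}\mathcal H$ is the quotient of $\mathcal H\otimes\mathcal H$ by the span of $xt(a)\otimes y-x\otimes t(a)y$. "${}_s\mathcal H$ is $A$-flat": flat as left $A$-module via $s$. In $(\mathcal H/\mathcal HB^+)\otimes_A\mathcal H$ the left factor is a right $A$-module via $t$ and $\mathcal H$ a left $A$-module via $s$; $\mathcal H\otimes_B\mathcal H$ uses the regular right and left $B$-actions. Right $\mathcal H$-comodule $A^o$-subring via $t$: subalgebra $B\supseteq t(A)$ with a coassociative counital right $A$-linear coaction $\delta:B\to B\otimes_A\mathcal H$ ($b\cdot a=t(a)b$; $\mathcal H$ left via $s$) such that $(\iota\otimes_A\mathcal H)\delta=\Delta\iota$. *)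

theory Defs
  imports "HOL-Library.Poly_Mapping"
begin

section \<open>Balanced tensor products as quotients of free abelian groups\<close>

text \<open>An element of the tensor product M \<otimes>_R N is represented by a formal
  Z-linear combination of pairs (m,n), i.e. a finitely supported map
  of type ('m x 'n =>0 int) with keys in M \<times> N; two representatives denote the same
  element iff their difference lies in the subgroup generated by the
  bilinearity and balancing relators.  (Over a k-algebra R containing k
  centrally, balancing over R already forces k-balancing, so the Z-tensor
  quotient coincides with the k-tensor quotient.)
  M is a right R-module via ract, N a left R-module via lact.\<close>

inductive_set tnull ::
  "'m set \<Rightarrow> ('m \<Rightarrow> 'm \<Rightarrow> 'm) \<Rightarrow> 'n set \<Rightarrow> ('n \<Rightarrow> 'n \<Rightarrow> 'n) \<Rightarrow> 'r set
   \<Rightarrow> ('m \<Rightarrow> 'r \<Rightarrow> 'm) \<Rightarrow> ('r \<Rightarrow> 'n \<Rightarrow> 'n) \<Rightarrow> ('m \<times> 'n \<Rightarrow>\<^sub>0 int) set"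
  for M addM N addN R ract lact where
  addl: "\<lbrakk>m \<in> M; m' \<in> M; n \<in> N\<rbrakk> \<Longrightarrow>
     frag_of (addM m m', n) - frag_of (m, n) - frag_of (m', n) \<in> tnull M addM N addN R ract lact"
| addr: "\<lbrakk>m \<in> M; n \<in> N; n' \<in> N\<rbrakk> \<Longrightarrow>
     frag_of (m, addN n n') - frag_of (m, n) - frag_of (m, n') \<in> tnull M addM N addN R ract lact"
| bal: "\<lbrakk>m \<in> M; r \<in> R; n \<in> N\<rbrakk> \<Longrightarrow>
     frag_of (ract m r, n) - frag_of (m, lact r n) \<in> tnull M addM N addN R ract lact"
| zero: "0 \<in> tnull M addM N addN R ract lact"
| plus: "\<lbrakk>z \<in> tnull M addM N addN R ract lact; w \<in> tnull M addM N addN R ract lact\<rbrakk>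
     \<Longrightarrow> z + w \<in> tnull M addM N addN R ract lact"
| neg: "z \<in> tnull M addM N addN R ract lact \<Longrightarrow> - z \<in> tnull M addM N addN R ract lact"

inductive_set tnull3 ::
  "'m1 set \<Rightarrow> ('m1 \<Rightarrow> 'm1 \<Rightarrow> 'm1) \<Rightarrow> 'm2 set \<Rightarrow> ('m2 \<Rightarrow> 'm2 \<Rightarrow> 'm2)
   \<Rightarrow> 'm3 set \<Rightarrow> ('m3 \<Rightarrow> 'm3 \<Rightarrow> 'm3) \<Rightarrow> 'r set
   \<Rightarrow> ('m1 \<Rightarrow> 'r \<Rightarrow> 'm1) \<Rightarrow> ('r \<Rightarrow> 'm2 \<Rightarrow> 'm2) \<Rightarrow> ('m2 \<Rightarrow> 'r \<Rightarrow> 'm2) \<Rightarrow> ('r \<Rightarrow> 'm3 \<Rightarrow> 'm3)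
   \<Rightarrow> ('m1 \<times> 'm2 \<times> 'm3 \<Rightarrow>\<^sub>0 int) set"
  for M1 add1 M2 add2 M3 add3 R ract1 lact2 ract2 lact3 where
  add1: "\<lbrakk>x \<in> M1; x' \<in> M1; y \<in> M2; z \<in> M3\<rbrakk> \<Longrightarrow>
     frag_of (add1 x x', y, z) - frag_of (x, y, z) - frag_of (x', y, z)
       \<in> tnull3 M1 add1 M2 add2 M3 add3 R ract1 lact2 ract2 lact3"
| add2: "\<lbrakk>x \<in> M1; y \<in> M2; y' \<in> M2; z \<in> M3\<rbrakk> \<Longrightarrow>
     frag_of (x, add2 y y', z) - frag_of (x, y, z) - frag_of (x, y', z)
       \<in> tnull3 M1 add1 M2 add2 M3 add3 R ract1 lact2 ract2 lact3"
| add3: "\<lbrakk>x \<in> M1; y \<in> M2; z \<in> M3; z' \<in> M3\<rbrakk> \<Longrightarrow>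
     frag_of (x, y, add3 z z') - frag_of (x, y, z) - frag_of (x, y, z')
       \<in> tnull3 M1 add1 M2 add2 M3 add3 R ract1 lact2 ract2 lact3"
| bal12: "\<lbrakk>x \<in> M1; r \<in> R; y \<in> M2; z \<in> M3\<rbrakk> \<Longrightarrow>
     frag_of (ract1 x r, y, z) - frag_of (x, lact2 r y, z)
       \<in> tnull3 M1 add1 M2 add2 M3 add3 R ract1 lact2 ract2 lact3"
| bal23: "\<lbrakk>x \<in> M1; y \<in> M2; r \<in> R; z \<in> M3\<rbrakk> \<Longrightarrow>
     frag_of (x, ract2 y r, z) - frag_of (x, y, lact3 r z)
       \<in> tnull3 M1 add1 M2 add2 M3 add3 R ract1 lact2 ract2 lact3"
| zero: "0 \<in> tnull3 M1 add1 M2 add2 M3 add3 R ract1 lact2 ract2 lact3"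
| plus: "\<lbrakk>z \<in> tnull3 M1 add1 M2 add2 M3 add3 R ract1 lact2 ract2 lact3;
          w \<in> tnull3 M1 add1 M2 add2 M3 add3 R ract1 lact2 ract2 lact3\<rbrakk>
     \<Longrightarrow> z + w \<in> tnull3 M1 add1 M2 add2 M3 add3 R ract1 lact2 ract2 lact3"
| neg: "z \<in> tnull3 M1 add1 M2 add2 M3 add3 R ract1 lact2 ract2 lact3
     \<Longrightarrow> - z \<in> tnull3 M1 add1 M2 add2 M3 add3 R ract1 lact2 ract2 lact3"

definition fsum :: "('x \<Rightarrow> 'h::ring_1) \<Rightarrow> ('x \<Rightarrow>\<^sub>0 int) \<Rightarrow> 'h" where
  "fsum f z = (\<Sum>p \<in> Poly_Mapping.keys z. of_int (Poly_Mapping.lookup z p) * f p)"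

definition nullA :: "('a \<Rightarrow> 'h::ring_1) \<Rightarrow> ('a \<Rightarrow> 'h) \<Rightarrow> ('h \<times> 'h \<Rightarrow>\<^sub>0 int) set" where
  "nullA s t = tnull UNIV (+) UNIV (+) UNIV (\<lambda>x a. t a * x) (\<lambda>a y. s a * y)"

definition nullA3 :: "('a \<Rightarrow> 'h::ring_1) \<Rightarrow> ('a \<Rightarrow> 'h) \<Rightarrow> ('h \<times> 'h \<times> 'h \<Rightarrow>\<^sub>0 int) set" where
  "nullA3 s t = tnull3 UNIV (+) UNIV (+) UNIV (+) UNIV
      (\<lambda>x a. t a * x) (\<lambda>a y. s a * y) (\<lambda>y a. t a * y) (\<lambda>a z. s a * z)"

definition nullAo :: "('a \<Rightarrow> 'h::ring_1) \<Rightarrow> ('h \<times> 'h \<Rightarrow>\<^sub>0 int) set" where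
  "nullAo t = tnull UNIV (+) UNIV (+) UNIV (\<lambda>x a. x * t a) (\<lambda>a y. t a * y)"

definition Delta_id :: "('h \<Rightarrow> ('h \<times> 'h \<Rightarrow>\<^sub>0 int)) \<Rightarrow> ('h \<times> 'h \<Rightarrow>\<^sub>0 int) \<Rightarrow> ('h \<times> 'h \<times> 'h \<Rightarrow>\<^sub>0 int)" where
  "Delta_id \<Delta> = frag_extend (\<lambda>(x, y). frag_extend (\<lambda>(u, v). frag_of (u, v, y)) (\<Delta> x))"

definition id_Delta :: "('h \<Rightarrow> ('h \<times> 'h \<Rightarrow>\<^sub>0 int)) \<Rightarrow> ('h \<times> 'h \<Rightarrow>\<^sub>0 int) \<Rightarrow> ('h \<times> 'h \<times> 'h \<Rightarrow>\<^sub>0 int)" where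
  "id_Delta \<Delta> = frag_extend (\<lambda>(x, y). frag_extend (\<lambda>(u, v). frag_of (x, u, v)) (\<Delta> y))"

definition k_algebra :: "('k::field \<Rightarrow> 'r::ring_1) \<Rightarrow> bool" where
  "k_algebra \<eta> \<longleftrightarrow> (\<forall>c d. \<eta> (c + d) = \<eta> c + \<eta> d \<and> \<eta> (c * d) = \<eta> c * \<eta> d) \<and> \<eta> 1 = 1
     \<and> (\<forall>c x. \<eta> c * x = x * \<eta> c)"

section \<open>Left bialgebroids and left Hopf algebroids\<close>

text \<open>The comultiplication \<Delta> : H \<rightarrow> H \<otimes>_A H is given by a choice of representatives
  \<Delta> x (any representative); all axioms are imposed modulo the tensor relations.
  k is the ground field, \<eta>A and \<eta>H the structure maps of the k-algebras A and H.\<close>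

definition left_bialgebroid ::
  "('k::field \<Rightarrow> 'a::ring_1) \<Rightarrow> ('k \<Rightarrow> 'h::ring_1) \<Rightarrow> ('a \<Rightarrow> 'h) \<Rightarrow> ('a \<Rightarrow> 'h)
   \<Rightarrow> ('h \<Rightarrow> ('h \<times> 'h \<Rightarrow>\<^sub>0 int)) \<Rightarrow> ('h \<Rightarrow> 'a) \<Rightarrow> bool" where
  "left_bialgebroid \<eta>A \<eta>H s t \<Delta> \<epsilon> \<longleftrightarrow>
     k_algebra \<eta>A \<and> k_algebra \<eta>H
   \<comment> \<open>s : A \<rightarrow> H and t : A^o \<rightarrow> H are k-algebra maps with commuting images\<close>
   \<and> (\<forall>a b. s (a + b) = s a + s b \<and> s (a * b) = s a * s b) \<and> s 1 = 1
   \<and> (\<forall>a b. t (a + b) = t a + t b \<and> t (a * b) = t b * t a) \<and> t 1 = 1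
   \<and> (\<forall>c. s (\<eta>A c) = \<eta>H c \<and> t (\<eta>A c) = \<eta>H c)
   \<and> (\<forall>a b. s a * t b = t b * s a)
   \<comment> \<open>\<Delta> is additive and A-bilinear (a\<cdot>h\<cdot>b = s(a)t(b)h)\<close>
   \<and> (\<forall>x y. \<Delta> (x + y) - \<Delta> x - \<Delta> y \<in> nullA s t)
   \<and> (\<forall>a b h. \<Delta> (s a * t b * h)
          - frag_extend (\<lambda>(x, y). frag_of (s a * x, t b * y)) (\<Delta> h) \<in> nullA s t)
   \<comment> \<open>\<epsilon> is additive and A-bilinear\<close>
   \<and> (\<forall>x y. \<epsilon> (x + y) = \<epsilon> x + \<epsilon> y)
   \<and> (\<forall>a b h. \<epsilon> (s a * t b * h) = a * \<epsilon> h * b)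
   \<comment> \<open>coassociativity and counitality\<close>
   \<and> (\<forall>h. Delta_id \<Delta> (\<Delta> h) - id_Delta \<Delta> (\<Delta> h) \<in> nullA3 s t)
   \<and> (\<forall>h. fsum (\<lambda>(x, y). s (\<epsilon> x) * y) (\<Delta> h) = h)
   \<and> (\<forall>h. fsum (\<lambda>(x, y). t (\<epsilon> y) * x) (\<Delta> h) = h)
   \<comment> \<open>\<Delta> takes values in the Takeuchi product and is an algebra map into it\<close>
   \<and> (\<forall>h a. frag_extend (\<lambda>(x, y). frag_of (x * t a, y)) (\<Delta> h)
          - frag_extend (\<lambda>(x, y). frag_of (x, y * s a)) (\<Delta> h) \<in> nullA s t)
   \<and> (\<forall>x y. \<Delta> (x * y)
          - frag_extend (\<lambda>(x1, x2). frag_extend (\<lambda>(y1, y2). frag_of (x1 * y1, x2 * y2)) (\<Delta> y)) (\<Delta> x)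
          \<in> nullA s t)
   \<and> \<Delta> 1 - frag_of (1, 1) \<in> nullA s t
   \<comment> \<open>counit axioms\<close>
   \<and> (\<forall>x y. \<epsilon> (x * s (\<epsilon> y)) = \<epsilon> (x * y) \<and> \<epsilon> (x * y) = \<epsilon> (x * t (\<epsilon> y)))
   \<and> \<epsilon> 1 = 1"

definition beta :: "('h::ring_1 \<Rightarrow> ('h \<times> 'h \<Rightarrow>\<^sub>0 int)) \<Rightarrow> ('h \<times> 'h \<Rightarrow>\<^sub>0 int) \<Rightarrow> ('h \<times> 'h \<Rightarrow>\<^sub>0 int)" where
  "beta \<Delta> = frag_extend (\<lambda>(x, y). frag_extend (\<lambda>(u, v). frag_of (u, v * y)) (\<Delta> x))"

definition left_hopf_algebroid ::
  "('k::field \<Rightarrow> 'a::ring_1) \<Rightarrow> ('k \<Rightarrow> 'h::ring_1) \<Rightarrow> ('a \<Rightarrow> 'h) \<Rightarrow> ('a \<Rightarrow> 'h)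
   \<Rightarrow> ('h \<Rightarrow> ('h \<times> 'h \<Rightarrow>\<^sub>0 int)) \<Rightarrow> ('h \<Rightarrow> 'a) \<Rightarrow> bool" where
  "left_hopf_algebroid \<eta>A \<eta>H s t \<Delta> \<epsilon> \<longleftrightarrow>
     left_bialgebroid \<eta>A \<eta>H s t \<Delta> \<epsilon>
   \<and> (\<forall>z. beta \<Delta> z \<in> nullA s t \<longrightarrow> z \<in> nullAo t)
   \<and> (\<forall>w. \<exists>z. beta \<Delta> z - w \<in> nullA s t)"

definition right_module :: "'m set \<Rightarrow> ('m \<Rightarrow> 'm \<Rightarrow> 'm) \<Rightarrow> ('m \<Rightarrow> 'a::ring_1 \<Rightarrow> 'm) \<Rightarrow> bool" where
  "right_module M add act \<longleftrightarrow>
     (\<forall>x\<in>M. \<forall>y\<in>M. add x y \<in> M) \<and> (\<forall>x\<in>M. \<forall>a. act x a \<in> M)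
   \<and> (\<forall>x\<in>M. \<forall>y\<in>M. \<forall>z\<in>M. add (add x y) z = add x (add y z))
   \<and> (\<forall>x\<in>M. \<forall>y\<in>M. add x y = add y x)
   \<and> (\<exists>e\<in>M. (\<forall>x\<in>M. add e x = x) \<and> (\<forall>x\<in>M. \<exists>y\<in>M. add x y = e))
   \<and> (\<forall>x\<in>M. \<forall>y\<in>M. \<forall>a. act (add x y) a = add (act x a) (act y a))
   \<and> (\<forall>x\<in>M. \<forall>a b. act x (a + b) = add (act x a) (act x b))
   \<and> (\<forall>x\<in>M. \<forall>a b. act x (a * b) = act (act x a) b)
   \<and> (\<forall>x\<in>M. act x 1 = x)"

text \<open>Modules are taken with carriers in the
  universe type 'a list set (which contains isomorphic copies of all finitely generated
  right A-modules A^n/K).\<close>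
definition s_flat :: "('a::ring_1 \<Rightarrow> 'h::ring_1) \<Rightarrow> bool" where
  "s_flat s \<longleftrightarrow>
     (\<forall>(N :: 'a list set set) N' add act.
        right_module N add act \<and> N' \<subseteq> N \<and> right_module N' add act \<longrightarrow>
        (\<forall>z. Poly_Mapping.keys z \<subseteq> N' \<times> UNIV \<longrightarrow>
              z \<in> tnull N add UNIV (+) UNIV act (\<lambda>a y. s a * y) \<longrightarrow>
              z \<in> tnull N' add UNIV (+) UNIV act (\<lambda>a y. s a * y)))"

definition nullBA :: "('a \<Rightarrow> 'h::ring_1) \<Rightarrow> ('a \<Rightarrow> 'h) \<Rightarrow> 'h set \<Rightarrow> ('h \<times> 'h \<Rightarrow>\<^sub>0 int) set" where
  "nullBA s t B = tnull B (+) UNIV (+) UNIV (\<lambda>b a. t a * b) (\<lambda>a y. s a * y)"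

definition nullBA3 :: "('a \<Rightarrow> 'h::ring_1) \<Rightarrow> ('a \<Rightarrow> 'h) \<Rightarrow> 'h set \<Rightarrow> ('h \<times> 'h \<times> 'h \<Rightarrow>\<^sub>0 int) set" where
  "nullBA3 s t B = tnull3 B (+) UNIV (+) UNIV (+) UNIV
      (\<lambda>b a. t a * b) (\<lambda>a y. s a * y) (\<lambda>y a. t a * y) (\<lambda>a z. s a * z)"

definition comodule_subring ::
  "('a::ring_1 \<Rightarrow> 'h::ring_1) \<Rightarrow> ('a \<Rightarrow> 'h) \<Rightarrow> ('h \<Rightarrow> ('h \<times> 'h \<Rightarrow>\<^sub>0 int)) \<Rightarrow> ('h \<Rightarrow> 'a)
   \<Rightarrow> 'h set \<Rightarrow> ('h \<Rightarrow> ('h \<times> 'h \<Rightarrow>\<^sub>0 int)) \<Rightarrow> bool" where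
  "comodule_subring s t \<Delta> \<epsilon> B \<delta> \<longleftrightarrow>
   \<comment> \<open>B is a subalgebra containing t(A)\<close>
     (\<forall>x\<in>B. \<forall>y\<in>B. x + y \<in> B \<and> x * y \<in> B) \<and> (\<forall>x\<in>B. - x \<in> B) \<and> 1 \<in> B
   \<and> (\<forall>a. t a \<in> B)
   \<comment> \<open>\<delta> lands in B \<otimes>_A H, is additive and right A-linear\<close>
   \<and> (\<forall>b\<in>B. Poly_Mapping.keys (\<delta> b) \<subseteq> B \<times> UNIV)
   \<and> (\<forall>b\<in>B. \<forall>b'\<in>B. \<delta> (b + b') - \<delta> b - \<delta> b' \<in> nullBA s t B)
   \<and> (\<forall>b\<in>B. \<forall>a. \<delta> (t a * b) - frag_extend (\<lambda>(c, y). frag_of (c, t a * y)) (\<delta> b) \<in> nullBA s t B)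
   \<comment> \<open>coassociativity and counitality\<close>
   \<and> (\<forall>b\<in>B. Delta_id \<delta> (\<delta> b) - id_Delta \<Delta> (\<delta> b) \<in> nullBA3 s t B)
   \<and> (\<forall>b\<in>B. fsum (\<lambda>(c, y). t (\<epsilon> y) * c) (\<delta> b) = b)
   \<comment> \<open>(\<iota> \<otimes>_A H) \<circ> \<delta> = \<Delta> \<circ> \<iota>\<close>
   \<and> (\<forall>b\<in>B. \<delta> b - \<Delta> b \<in> nullA s t)"

definition HBplus :: "('h::ring_1 \<Rightarrow> 'a::ring_1) \<Rightarrow> 'h set \<Rightarrow> 'h set" where
  "HBplus \<epsilon> B = {(\<Sum>i<(n::nat). h i * b i) | n h b. \<forall>i<n. b i \<in> B \<and> \<epsilon> (b i) = 0}"

definition qproj :: "'h::ring_1 set \<Rightarrow> 'h \<Rightarrow> 'h set" where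
  "qproj N x = {y. y - x \<in> N}"

text \<open>(H/N) \<otimes>_A H, where H/N is a right A-module via \<pi>(x)\<cdot>a = \<pi>(t(a)x).\<close>
definition nullQ :: "('a \<Rightarrow> 'h::ring_1) \<Rightarrow> ('a \<Rightarrow> 'h) \<Rightarrow> 'h set \<Rightarrow> ('h set \<times> 'h \<Rightarrow>\<^sub>0 int) set" where
  "nullQ s t N = tnull (qproj N ` UNIV) (\<lambda>C D. \<Union>x\<in>C. \<Union>y\<in>D. qproj N (x + y)) UNIV (+) UNIV
      (\<lambda>C a. \<Union>x\<in>C. qproj N (t a * x)) (\<lambda>a y. s a * y)"

definition nullB :: "'h::ring_1 set \<Rightarrow> ('h \<times> 'h \<Rightarrow>\<^sub>0 int) set" where
  "nullB B = tnull UNIV (+) UNIV (+) B (*) (*)"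

definition canmap :: "('h::ring_1 \<Rightarrow> ('h \<times> 'h \<Rightarrow>\<^sub>0 int)) \<Rightarrow> 'h set \<Rightarrow> ('h \<times> 'h \<Rightarrow>\<^sub>0 int)
   \<Rightarrow> ('h set \<times> 'h \<Rightarrow>\<^sub>0 int)" where
  "canmap \<Delta> N = frag_extend (\<lambda>(x, y). frag_extend (\<lambda>(u, v). frag_of (qproj N u, v * y)) (\<Delta> x))"

end

theory Submission
  imports Defs
begin


lemma frag_cmul_diff2: "frag_cmul k (a - b) = frag_cmul k a - frag_cmul k b"
  by (rule poly_mapping_eqI) (simp add: lookup_minus algebra_simps)

lemma fext_fdiff: "frag_extend (\<lambda>x. f x - g x) c = frag_extend f c - frag_extend g c"
  unfolding frag_extend_def by (simp add: frag_cmul_diff2 sum_subtractf)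

lemma fext_fadd: "frag_extend (\<lambda>x. f x + g x) c = frag_extend f c + frag_extend g c"
  unfolding frag_extend_def by (simp add: frag_cmul_distrib2 sum.distrib)

lemma fext_fzero: "frag_extend (\<lambda>x. 0) c = 0"
  unfolding frag_extend_def by simp

lemma fext_comp: "frag_extend f (frag_extend g c) = frag_extend (\<lambda>x. frag_extend f (g x)) c"
  using subset_UNIV
  by (induction c rule: frag_induction) (auto simp: frag_extend_diff)

lemma fext_swap:
  "frag_extend (\<lambda>a. frag_extend (\<lambda>b. F a b) W) V = frag_extend (\<lambda>b. frag_extend (\<lambda>a. F a b) V) W"
  using subset_UNIV
  by (induction V rule: frag_induction) (auto simp: frag_extend_diff fext_fdiff fext_fzero)

definition subgrp :: "('x \<Rightarrow>\<^sub>0 int) set \<Rightarrow> bool" where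
  "subgrp T \<longleftrightarrow> 0 \<in> T \<and> (\<forall>x y. x \<in> T \<longrightarrow> y \<in> T \<longrightarrow> x - y \<in> T)"

lemma subgrp_diff: "subgrp T \<Longrightarrow> x \<in> T \<Longrightarrow> y \<in> T \<Longrightarrow> x - y \<in> T"
  by (simp add: subgrp_def)
lemma subgrp_0: "subgrp T \<Longrightarrow> 0 \<in> T"
  by (simp add: subgrp_def)
lemma subgrp_neg: "subgrp T \<Longrightarrow> x \<in> T \<Longrightarrow> - x \<in> T"
  using subgrp_diff[of T 0 x] by (simp add: subgrp_def)
lemma subgrp_add: "subgrp T \<Longrightarrow> x \<in> T \<Longrightarrow> y \<in> T \<Longrightarrow> x + y \<in> T"
  using subgrp_diff[of T x "- y"] subgrp_neg[of T y] by simp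

lemma ext_in:
  assumes "subgrp T" "\<And>x. x \<in> Poly_Mapping.keys c \<Longrightarrow> f x \<in> T"
  shows "frag_extend f c \<in> T"
proof -
  have "Poly_Mapping.keys c \<subseteq> Poly_Mapping.keys c" by simp
  then show ?thesis
    by (induction c rule: frag_induction)
      (auto simp: frag_extend_diff assms subgrp_0 subgrp_diff)
qed

lemma ext_in_diff:
  assumes "subgrp T" "\<And>x. x \<in> Poly_Mapping.keys c \<Longrightarrow> f x - g x \<in> T"
  shows "frag_extend f c - frag_extend g c \<in> T"
  using ext_in[OF assms(1), of c "\<lambda>x. f x - g x"] assms(2) by (simp add: fext_fdiff)

lemma subgrp_tnull: "subgrp (tnull M addM N addN R ract lact)"
  unfolding subgrp_def
  by (metis diff_conv_add_uminus tnull.neg tnull.plus tnull.zero)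

lemma tnull_map:
  assumes T: "subgrp T"
    and a1: "\<And>m m' n. m \<in> M \<Longrightarrow> m' \<in> M \<Longrightarrow> n \<in> N \<Longrightarrow> F (addM m m', n) - F (m, n) - F (m', n) \<in> T"
    and a2: "\<And>m n n'. m \<in> M \<Longrightarrow> n \<in> N \<Longrightarrow> n' \<in> N \<Longrightarrow> F (m, addN n n') - F (m, n) - F (m, n') \<in> T"
    and a3: "\<And>m r n. m \<in> M \<Longrightarrow> r \<in> R \<Longrightarrow> n \<in> N \<Longrightarrow> F (ract m r, n) - F (m, lact r n) \<in> T"
    and z: "z \<in> tnull M addM N addN R ract lact"
  shows "frag_extend F z \<in> T"
  using z
proof induction
  case (zero) then show ?case using T by (simp add: subgrp_0)
next
  case (plus z w) then show ?case using T by (simp add: frag_extend_add subgrp_add)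
next
  case (neg z) then show ?case using T by (simp add: frag_extend_minus subgrp_neg)
qed (simp_all add: frag_extend_diff a1 a2 a3)

lemma tnull_gen_addl: "m \<in> M \<Longrightarrow> m' \<in> M \<Longrightarrow> n \<in> N \<Longrightarrow>
  frag_of (addM m m', n) - frag_of (m, n) - frag_of (m', n) \<in> tnull M addM N addN R ract lact"
  by (rule tnull.addl)

lemma tnull_of_zero2: "m \<in> M \<Longrightarrow> frag_of (m, 0::'b::monoid_add) \<in> tnull M addM UNIV (+) R ract lact"
proof -
  assume "m \<in> M"
  then have "frag_of (m, 0 + 0) - frag_of (m, 0) - frag_of (m, 0) \<in> tnull M addM UNIV (+) R ract lact"
    by (intro tnull.addr) auto
  moreover have "frag_of (m, 0 + 0) - frag_of (m, 0) - frag_of (m, 0) = - frag_of (m, 0::'b::monoid_add)" by simp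
  ultimately have "- frag_of (m, 0) \<in> tnull M addM UNIV (+) R ract lact" by simp
  then show ?thesis using tnull.neg by fastforce
qed

lemma fsum_superset: "finite S \<Longrightarrow> Poly_Mapping.keys z \<subseteq> S \<Longrightarrow>
   fsum f z = (\<Sum>p\<in>S. of_int (Poly_Mapping.lookup z p) * f p)"
  unfolding fsum_def by (rule sum.mono_neutral_left) (auto simp: in_keys_iff)

lemma fsum_add: "fsum f (z + w) = fsum f z + fsum f w"
proof -
  let ?S = "Poly_Mapping.keys z \<union> Poly_Mapping.keys w"
  have f: "finite ?S" by simp
  have k: "Poly_Mapping.keys (z + w) \<subseteq> ?S" by (rule keys_add)
  show ?thesis
    by (simp add: fsum_superset[OF f k] fsum_superset[OF f, of z] fsum_superset[OF f, of w]
        lookup_add distrib_right sum.distrib)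
qed

lemma fsum_0[simp]: "fsum f 0 = 0"
  by (simp add: fsum_def)

lemma fsum_of[simp]: "fsum f (frag_of p) = f p"
  by (simp add: fsum_def keys_frag_of)

lemma fsum_minus: "fsum f (- z) = - fsum f z"
  using fsum_add[of f z "- z"] by (simp add: eq_neg_iff_add_eq_0 add.commute)

lemma fsum_diff: "fsum f (z - w) = fsum f z - fsum f w"
  using fsum_add[of f z "- w"] by (simp add: fsum_minus)

lemma fsum_ext: "fsum f (frag_extend g c) = fsum (\<lambda>x. fsum f (g x)) c"
  using subset_UNIV
  by (induction c rule: frag_induction) (auto simp: frag_extend_diff fsum_diff)

lemma fsum_mult_right: "fsum (\<lambda>x. f x * Q) z = fsum f z * Q"
  unfolding fsum_def by (simp add: sum_distrib_right mult.assoc)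

lemma fsum_mult_left: "fsum (\<lambda>x. Q * f x) z = Q * fsum f z"
  unfolding fsum_def by (simp add: sum_distrib_left) (metis (no_types) mult_of_int_commute mult.assoc)

lemma lin2:
  assumes "m \<in> M"
  shows "frag_extend (\<lambda>x. frag_of (m, g x)) z - frag_of (m, fsum g z) \<in> tnull M addM UNIV (+) R ract lact"
  using subset_UNIV
proof (induction z rule: frag_induction)
  case zero
  then show ?case using tnull_of_zero2[OF assms] tnull.neg by fastforce
next
  case (one x)
  then show ?case by (simp add: tnull.zero)
next
  case (diff a b)
  let ?T = "tnull M addM UNIV (+) R ract lact"
  have r: "frag_of (m, (fsum g a - fsum g b) + fsum g b) - frag_of (m, fsum g a - fsum g b) - frag_of (m, fsum g b) \<in> ?T"
    by (intro tnull.addr assms) auto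
  have "frag_extend (\<lambda>x. frag_of (m, g x)) (a - b) - frag_of (m, fsum g (a - b)) =
     (frag_extend (\<lambda>x. frag_of (m, g x)) a - frag_of (m, fsum g a))
   - (frag_extend (\<lambda>x. frag_of (m, g x)) b - frag_of (m, fsum g b))
   + (frag_of (m, (fsum g a - fsum g b) + fsum g b) - frag_of (m, fsum g a - fsum g b) - frag_of (m, fsum g b))"
    by (simp add: frag_extend_diff fsum_diff)
  then show ?case using diff r subgrp_tnull
    by (metis subgrp_add subgrp_diff)
qed


lemma ext_in_diff3:
  assumes "subgrp T" "\<And>x. x \<in> Poly_Mapping.keys c \<Longrightarrow> f x - g x - h x \<in> T"
  shows "frag_extend f c - frag_extend g c - frag_extend h c \<in> T"
  using ext_in[OF assms(1), of c "\<lambda>x. f x - g x - h x"] assms(2) by (simp add: fext_fdiff)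


lemma subgrp_trans: "subgrp T \<Longrightarrow> a - b \<in> T \<Longrightarrow> b - c \<in> T \<Longrightarrow> a - c \<in> T"
  using subgrp_add[of T "a - b" "b - c"] by simp

lemma subgrp_sym: "subgrp T \<Longrightarrow> a - b \<in> T \<Longrightarrow> b - a \<in> T"
  using subgrp_neg[of T "a - b"] by simp

lemma subgrp_eq: "subgrp T \<Longrightarrow> a = b \<Longrightarrow> a - b \<in> T"
  by (simp add: subgrp_0)

lemma fext_swap2:
  "frag_extend (\<lambda>(a1, a2). frag_extend (\<lambda>(b1, b2). F a1 a2 b1 b2) W) V
 = frag_extend (\<lambda>(b1, b2). frag_extend (\<lambda>(a1, a2). F a1 a2 b1 b2) V) W"
  using fext_swap[of "\<lambda>a b. F (fst a) (snd a) (fst b) (snd b)" W V] by (simp add: split_def)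


locale ctx =
  fixes s t :: "'a::ring_1 \<Rightarrow> 'h::ring_1" and \<Delta> :: "'h \<Rightarrow> ('h \<times> 'h \<Rightarrow>\<^sub>0 int)"
    and \<epsilon> :: "'h \<Rightarrow> 'a" and B :: "'h set" and \<delta> :: "'h \<Rightarrow> ('h \<times> 'h \<Rightarrow>\<^sub>0 int)"
  assumes s_add: "\<And>a b. s (a + b) = s a + s b" and s_mult: "\<And>a b. s (a * b) = s a * s b" and s_one: "s 1 = 1"
    and eps_add: "\<And>x y. \<epsilon> (x + y) = \<epsilon> x + \<epsilon> y"
    and eps_st: "\<And>a b h. \<epsilon> (s a * t b * h) = a * \<epsilon> h * b"
    and eps_one: "\<epsilon> 1 = 1"
    and D_add: "\<And>x y. \<Delta> (x + y) - \<Delta> x - \<Delta> y \<in> nullA s t"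
    and cu: "\<And>h. fsum (\<lambda>(x, y). s (\<epsilon> x) * y) (\<Delta> h) = h"
    and tak: "\<And>h a. frag_extend (\<lambda>(x, y). frag_of (x * t a, y)) (\<Delta> h)
          - frag_extend (\<lambda>(x, y). frag_of (x, y * s a)) (\<Delta> h) \<in> nullA s t"
    and D_mult: "\<And>x y. \<Delta> (x * y)
          - frag_extend (\<lambda>(x1, x2). frag_extend (\<lambda>(y1, y2). frag_of (x1 * y1, x2 * y2)) (\<Delta> y)) (\<Delta> x)
          \<in> nullA s t"
    and beta_inj: "\<And>z. beta \<Delta> z \<in> nullA s t \<Longrightarrow> z \<in> nullAo t"
    and beta_surj: "\<And>w. \<exists>z. beta \<Delta> z - w \<in> nullA s t"
    and B_add: "\<And>x y. x \<in> B \<Longrightarrow> y \<in> B \<Longrightarrow> x + y \<in> B"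
    and B_neg: "\<And>x. x \<in> B \<Longrightarrow> - x \<in> B"
    and B_t: "\<And>a. t a \<in> B"
    and d_keys: "\<And>b. b \<in> B \<Longrightarrow> Poly_Mapping.keys (\<delta> b) \<subseteq> B \<times> UNIV"
    and d_D: "\<And>b. b \<in> B \<Longrightarrow> \<delta> b - \<Delta> b \<in> nullA s t"
    and galois: "\<And>b. b \<in> B \<Longrightarrow> \<exists>w. Poly_Mapping.keys w \<subseteq> B \<times> UNIV
                        \<and> beta \<Delta> w - frag_of (b, 1) \<in> nullA s t"
begin

abbreviation "N \<equiv> HBplus \<epsilon> B"

lemma s_zero: "s 0 = 0"
  using s_add[of 0 0] by simp

lemma eps_t: "\<epsilon> (t a) = a"
  using eps_st[of 1 a 1] by (simp add: s_one eps_one)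

lemma eps_neg: "\<epsilon> (- x) = - \<epsilon> x"
  using eps_add[of x "- x"] eps_add[of 0 0] by (simp add: eq_neg_iff_add_eq_0 add.commute)

lemma eps_diff: "\<epsilon> (x - y) = \<epsilon> x - \<epsilon> y"
  using eps_add[of x "- y"] eps_neg[of y] by simp

lemma B_diff: "x \<in> B \<Longrightarrow> y \<in> B \<Longrightarrow> x - y \<in> B"
  using B_add[of x "- y"] B_neg[of y] by simp

lemma N_zero: "0 \<in> N"
  unfolding HBplus_def by (rule CollectI, rule exI[of _ 0]) auto

lemma N_step: assumes "x \<in> N" "b \<in> B" "\<epsilon> b = 0" shows "x + h * b \<in> N"
proof -
  have "\<exists>(n::nat) hh bb. x = (\<Sum>i<n. hh i * bb i) \<and> (\<forall>i<n. bb i \<in> B \<and> \<epsilon> (bb i) = 0)"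
    using assms(1) by (simp add: HBplus_def)
  then obtain n hh bb where x: "x = (\<Sum>i<(n::nat). hh i * bb i)" and bb: "\<forall>i<n. bb i \<in> B \<and> \<epsilon> (bb i) = 0"
    by blast
  let ?h = "hh(n := h)" and ?b = "bb(n := b)"
  have "(\<Sum>i<Suc n. ?h i * ?b i) = x + h * b"
    by (simp add: x)
  moreover have "\<forall>i<Suc n. ?b i \<in> B \<and> \<epsilon> (?b i) = 0" using bb assms by (auto simp: less_Suc_eq)
  ultimately have "\<exists>(m::nat) hh bb. x + h * b = (\<Sum>i<m. hh i * bb i) \<and> (\<forall>i<m. bb i \<in> B \<and> \<epsilon> (bb i) = 0)"
    by metis
  then show ?thesis by (simp add: HBplus_def)
qed

lemma N_induct[consumes 1]:
  assumes "n \<in> N" "P 0" "\<And>x h b. P x \<Longrightarrow> x \<in> N \<Longrightarrow> b \<in> B \<Longrightarrow> \<epsilon> b = 0 \<Longrightarrow> P (x + h * b)"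
  shows "P n"
proof -
  have "\<exists>(m::nat) hh bb. n = (\<Sum>i<m. hh i * bb i) \<and> (\<forall>i<m. bb i \<in> B \<and> \<epsilon> (bb i) = 0)"
    using assms(1) by (simp add: HBplus_def)
  then obtain m hh bb where x: "n = (\<Sum>i<(m::nat). hh i * bb i)" and bb: "\<forall>i<m. bb i \<in> B \<and> \<epsilon> (bb i) = 0"
    by blast
  have "P (\<Sum>i<k. hh i * bb i) \<and> (\<Sum>i<k. hh i * bb i) \<in> N" if "k \<le> m" for k
    using that
  proof (induction k)
    case 0 then show ?case using assms(2) N_zero by simp
  next
    case (Suc k)
    then have "bb k \<in> B" "\<epsilon> (bb k) = 0" using bb by auto
    then show ?case using Suc assms(3) N_step by simp
  qed
  then show ?thesis using x by simp
qed

lemma N_add: assumes "x \<in> N" "y \<in> N" shows "x + y \<in> N"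
  by (rule N_induct[OF assms(2), where P="\<lambda>y. x + y \<in> N"]) (simp_all add: assms N_step flip: add.assoc)

lemma N_neg: assumes "x \<in> N" shows "- x \<in> N"
proof (rule N_induct[OF assms, where P="\<lambda>x. - x \<in> N"])
  show "- 0 \<in> N" by (simp add: N_zero)
next
  fix x h b assume "- x \<in> N" "b \<in> B" "\<epsilon> b = 0"
  then have "- x + (- h) * b \<in> N" using N_step[of "- x" b "- h"] by simp
  moreover have "- (x + h * b) = - x + (- h) * b" by simp
  ultimately show "- (x + h * b) \<in> N" by simp
qed

lemma N_diff: "x \<in> N \<Longrightarrow> y \<in> N \<Longrightarrow> x - y \<in> N"
  using N_add[of x "- y"] N_neg[of y] by simp

lemma N_lmult: assumes "x \<in> N" shows "c * x \<in> N"
proof (rule N_induct[OF assms, where P="\<lambda>x. c * x \<in> N"])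
  show "c * 0 \<in> N" by (simp add: N_zero)
next
  fix x h b assume "c * x \<in> N" "b \<in> B" "\<epsilon> b = 0"
  then have "c * x + (c * h) * b \<in> N" by (simp add: N_step)
  moreover have "c * (x + h * b) = c * x + (c * h) * b" by (simp add: algebra_simps)
  ultimately show "c * (x + h * b) \<in> N" by simp
qed

lemma N_gen: "b \<in> B \<Longrightarrow> \<epsilon> b = 0 \<Longrightarrow> h * b \<in> N"
  using N_step[OF N_zero] by simp

abbreviation "\<pi> \<equiv> qproj N"

lemma pi_mem: "x \<in> \<pi> x"
  by (simp add: qproj_def N_zero)

lemma pi_eq: "y - x \<in> N \<Longrightarrow> \<pi> y = \<pi> x"
  unfolding qproj_def
  by (auto, metis N_add diff_add_cancel add_diff_eq, metis N_diff diff_diff_eq2 diff_add_cancel)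

lemma pi_eq_mem: "y \<in> \<pi> x \<Longrightarrow> \<pi> y = \<pi> x"
  by (rule pi_eq) (simp add: qproj_def)

lemma pi_addM: "(\<Union>u\<in>\<pi> x. \<Union>v\<in>\<pi> y. \<pi> (u + v)) = \<pi> (x + y)"
proof -
  have "\<pi> (u + v) = \<pi> (x + y)" if "u \<in> \<pi> x" "v \<in> \<pi> y" for u v
  proof (rule pi_eq)
    have "u - x \<in> N" "v - y \<in> N" using that by (auto simp: qproj_def)
    then have "(u - x) + (v - y) \<in> N" by (rule N_add)
    then show "u + v - (x + y) \<in> N" by (simp add: algebra_simps)
  qed
  then show ?thesis using pi_mem[of x] pi_mem[of y] by blast
qed

lemma pi_ract: "(\<Union>u\<in>\<pi> x. \<pi> (t a * u)) = \<pi> (t a * x)"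
proof -
  have "\<pi> (t a * u) = \<pi> (t a * x)" if "u \<in> \<pi> x" for u
  proof (rule pi_eq)
    have "u - x \<in> N" using that by (auto simp: qproj_def)
    then have "t a * (u - x) \<in> N" by (rule N_lmult)
    then show "t a * u - t a * x \<in> N" by (simp add: algebra_simps)
  qed
  then show ?thesis using pi_mem[of x] by blast
qed

end


definition bim :: "'h::ring_1 \<Rightarrow> 'h \<Rightarrow> ('h \<times> 'h \<Rightarrow>\<^sub>0 int) \<Rightarrow> ('h \<times> 'h \<Rightarrow>\<^sub>0 int)" where
  "bim u v z = frag_extend (\<lambda>(x, y). frag_of (x * u, y * v)) z"

definition rm :: "'h::ring_1 \<Rightarrow> ('h \<times> 'h \<Rightarrow>\<^sub>0 int) \<Rightarrow> ('h \<times> 'h \<Rightarrow>\<^sub>0 int)" where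
  "rm v z = frag_extend (\<lambda>(x, y). frag_of (x, y * v)) z"

definition pmap :: "'h::ring_1 set \<Rightarrow> ('h \<times> 'h \<Rightarrow>\<^sub>0 int) \<Rightarrow> ('h set \<times> 'h \<Rightarrow>\<^sub>0 int)" where
  "pmap N z = frag_extend (\<lambda>(u, v). frag_of (qproj N u, v)) z"

definition mult :: "('h::ring_1 \<times> 'h \<Rightarrow>\<^sub>0 int) \<Rightarrow> ('h \<times> 'h \<Rightarrow>\<^sub>0 int) \<Rightarrow> ('h \<times> 'h \<Rightarrow>\<^sub>0 int)" where
  "mult D z = frag_extend (\<lambda>(x1, x2). frag_extend (\<lambda>(y1, y2). frag_of (x1 * y1, x2 * y2)) z) D"

lemma rm_bim: "rm v z = bim 1 v z"
  by (simp add: rm_def bim_def)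

lemma rm_diff: "rm v (a - b) = rm v a - rm v b"
  by (simp add: rm_def frag_extend_diff)
lemma rm_add: "rm v (a + b) = rm v a + rm v b"
  by (simp add: rm_def frag_extend_add)
lemma rm_of[simp]: "rm v (frag_of (x, y)) = frag_of (x, y * v)"
  by (simp add: rm_def)
lemma rm_rm: "rm v (rm w z) = rm (w * v) z"
  unfolding rm_def fext_comp by (rule frag_extend_eq) (auto simp: mult.assoc)
lemma bim_diff: "bim u v (a - b) = bim u v a - bim u v b"
  by (simp add: bim_def frag_extend_diff)
lemma pmap_diff: "pmap N (a - b) = pmap N a - pmap N b"
  by (simp add: pmap_def frag_extend_diff)

lemma subgrp_nullA: "subgrp (nullA s t)" by (simp add: nullA_def subgrp_tnull)
lemma subgrp_nullAo: "subgrp (nullAo t)" by (simp add: nullAo_def subgrp_tnull)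
lemma subgrp_nullB: "subgrp (nullB B)" by (simp add: nullB_def subgrp_tnull)
lemma subgrp_nullQ: "subgrp (nullQ s t N)" by (simp add: nullQ_def subgrp_tnull)

lemma nullA_addl: "frag_of (m + m', n) - frag_of (m, n) - frag_of (m', n) \<in> nullA s t"
  unfolding nullA_def by (rule tnull.addl) auto
lemma nullA_addr: "frag_of (m, n + n') - frag_of (m, n) - frag_of (m, n') \<in> nullA s t"
  unfolding nullA_def by (rule tnull.addr) auto
lemma nullA_bal: "frag_of (t a * m, n) - frag_of (m, s a * n) \<in> nullA s t"
  unfolding nullA_def using tnull.bal[where M=UNIV and N=UNIV and R=UNIV and m=m and r=a and n=n and addM="(+)" and addN="(+)"
    and ract="\<lambda>x a. t a * x" and lact="\<lambda>a y. s a * y"] by simp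
lemma nullB_addl: "frag_of (m + m', n) - frag_of (m, n) - frag_of (m', n) \<in> nullB B"
  unfolding nullB_def by (rule tnull.addl) auto
lemma nullB_addr: "frag_of (m, n + n') - frag_of (m, n) - frag_of (m, n') \<in> nullB B"
  unfolding nullB_def by (rule tnull.addr) auto
lemma nullB_bal: "r \<in> B \<Longrightarrow> frag_of (m * r, n) - frag_of (m, r * n) \<in> nullB B"
  unfolding nullB_def using tnull.bal[where M=UNIV and N=UNIV and R=B and m=m and r=r and n=n and addM="(+)" and addN="(+)"
    and ract="(*)" and lact="(*)"] by simp

lemma nullA_of_zero2: "frag_of (m, 0) \<in> nullA s t"
  unfolding nullA_def by (rule tnull_of_zero2) auto

context ctx
begin

lemma bim_nullA: assumes "z \<in> nullA s t" shows "bim u v z \<in> nullA s t"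
  unfolding bim_def
proof (rule tnull_map[OF subgrp_nullA])
  show "z \<in> tnull UNIV (+) UNIV (+) UNIV (\<lambda>x a. t a * x) (\<lambda>a y. s a * y)"
    using assms by (simp add: nullA_def)
next
  fix m m' n :: 'h
  show "(case (m + m', n) of (x, y) \<Rightarrow> frag_of (x * u, y * v)) - (case (m, n) of (x, y) \<Rightarrow> frag_of (x * u, y * v))
         - (case (m', n) of (x, y) \<Rightarrow> frag_of (x * u, y * v)) \<in> nullA s t"
    using nullA_addl by (simp add: distrib_right)
next
  fix m n n' :: 'h
  show "(case (m, n + n') of (x, y) \<Rightarrow> frag_of (x * u, y * v)) - (case (m, n) of (x, y) \<Rightarrow> frag_of (x * u, y * v))
         - (case (m, n') of (x, y) \<Rightarrow> frag_of (x * u, y * v)) \<in> nullA s t"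
    using nullA_addr by (simp add: distrib_right)
next
  fix m n :: 'h and r :: 'a
  show "(case (t r * m, n) of (x, y) \<Rightarrow> frag_of (x * u, y * v)) - (case (m, s r * n) of (x, y) \<Rightarrow> frag_of (x * u, y * v)) \<in> nullA s t"
    using nullA_bal[where a=r and m="m * u" and n="n * v"] by (simp add: mult.assoc)
qed

lemma rm_nullA: "z \<in> nullA s t \<Longrightarrow> rm v z \<in> nullA s t"
  by (simp add: rm_bim bim_nullA)

lemma pmap_nullQ: assumes "z \<in> nullA s t" shows "pmap N z \<in> nullQ s t N"
  unfolding pmap_def nullQ_def
proof (rule tnull_map[OF subgrp_tnull])
  show "z \<in> tnull UNIV (+) UNIV (+) UNIV (\<lambda>x a. t a * x) (\<lambda>a y. s a * y)"
    using assms by (simp add: nullA_def)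
next
  fix m m' n :: 'h
  have "frag_of ((\<Union>x\<in>\<pi> m. \<Union>y\<in>\<pi> m'. \<pi> (x + y)), n) - frag_of (\<pi> m, n) - frag_of (\<pi> m', n)
     \<in> tnull (range \<pi>) (\<lambda>C D. \<Union>x\<in>C. \<Union>y\<in>D. \<pi> (x + y)) UNIV (+) UNIV (\<lambda>C a. \<Union>x\<in>C. \<pi> (t a * x)) (\<lambda>a y. s a * y)"
    by (rule tnull.addl) auto
  then show "(case (m + m', n) of (u, v) \<Rightarrow> frag_of (\<pi> u, v)) - (case (m, n) of (u, v) \<Rightarrow> frag_of (\<pi> u, v))
         - (case (m', n) of (u, v) \<Rightarrow> frag_of (\<pi> u, v))
     \<in> tnull (range \<pi>) (\<lambda>C D. \<Union>x\<in>C. \<Union>y\<in>D. \<pi> (x + y)) UNIV (+) UNIV (\<lambda>C a. \<Union>x\<in>C. \<pi> (t a * x)) (\<lambda>a y. s a * y)"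
    by (simp only: pi_addM prod.case)
next
  fix m n n' :: 'h
  show "(case (m, n + n') of (u, v) \<Rightarrow> frag_of (\<pi> u, v)) - (case (m, n) of (u, v) \<Rightarrow> frag_of (\<pi> u, v))
         - (case (m, n') of (u, v) \<Rightarrow> frag_of (\<pi> u, v))
     \<in> tnull (range \<pi>) (\<lambda>C D. \<Union>x\<in>C. \<Union>y\<in>D. \<pi> (x + y)) UNIV (+) UNIV (\<lambda>C a. \<Union>x\<in>C. \<pi> (t a * x)) (\<lambda>a y. s a * y)"
    by (simp only: prod.case) (rule tnull.addr, auto)
next
  fix m n :: 'h and r :: 'a
  have "frag_of ((\<Union>x\<in>\<pi> m. \<pi> (t r * x)), n) - frag_of (\<pi> m, s r * n)
     \<in> tnull (range \<pi>) (\<lambda>C D. \<Union>x\<in>C. \<Union>y\<in>D. \<pi> (x + y)) UNIV (+) UNIV (\<lambda>C a. \<Union>x\<in>C. \<pi> (t a * x)) (\<lambda>a y. s a * y)"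
    using tnull.bal[where M="range \<pi>" and N=UNIV and R=UNIV and m="\<pi> m" and r=r and n=n
      and addM="\<lambda>C D. \<Union>x\<in>C. \<Union>y\<in>D. \<pi> (x + y)" and addN="(+)"
    and ract="\<lambda>C a. \<Union>x\<in>C. \<pi> (t a * x)" and lact="\<lambda>a y. s a * y"] by simp
  then show "(case (t r * m, n) of (u, v) \<Rightarrow> frag_of (\<pi> u, v)) - (case (m, s r * n) of (u, v) \<Rightarrow> frag_of (\<pi> u, v))
     \<in> tnull (range \<pi>) (\<lambda>C D. \<Union>x\<in>C. \<Union>y\<in>D. \<pi> (x + y)) UNIV (+) UNIV (\<lambda>C a. \<Union>x\<in>C. \<pi> (t a * x)) (\<lambda>a y. s a * y)"
    by (simp only: pi_ract prod.case)
qed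

lemma rm_nullB: assumes "z \<in> nullAo t" shows "rm v z \<in> nullB B"
  unfolding rm_def
proof (rule tnull_map[OF subgrp_nullB])
  show "z \<in> tnull UNIV (+) UNIV (+) UNIV (\<lambda>x a. x * t a) (\<lambda>a y. t a * y)"
    using assms by (simp add: nullAo_def)
next
  fix m n :: 'h and r :: 'a
  show "(case (m * t r, n) of (x, y) \<Rightarrow> frag_of (x, y * v)) - (case (m, t r * n) of (x, y) \<Rightarrow> frag_of (x, y * v)) \<in> nullB B"
    using nullB_bal[OF B_t, where a1=r and m=m and n="n * v"] by (simp add: mult.assoc)
qed (simp_all add: nullB_addl nullB_addr distrib_right)

lemma fsum_nullA: assumes "z \<in> nullA s t" shows "fsum (\<lambda>(x, y). s (\<epsilon> x) * y) z = 0"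
  using assms unfolding nullA_def
proof induction
  case (addl m m' n) then show ?case by (simp add: fsum_diff eps_add s_add distrib_right)
next
  case (addr m n n') then show ?case by (simp add: fsum_diff distrib_left)
next
  case (bal m r n) 
  have "\<epsilon> (t r * m) = \<epsilon> m * r" using eps_st[of 1 r m] by (simp add: s_one)
  then show ?case by (simp add: fsum_diff s_mult mult.assoc)
next
  case (plus z w) then show ?case by (simp add: fsum_add)
next
  case (neg z) then show ?case by (simp add: fsum_minus)
qed simp

end

lemma mult_alt: "mult D z = frag_extend (\<lambda>(y1, y2). frag_extend (\<lambda>(x1, x2). frag_of (x1 * y1, x2 * y2)) D) z"
  using subset_UNIV
proof (induction D rule: frag_induction)
  case zero then show ?case by (simp add: mult_def split_def fext_fzero)
next
  case (one x) then show ?case by (simp add: mult_def split_def)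
next
  case (diff a b) then show ?case by (simp add: mult_def split_def frag_extend_diff fext_fdiff)
qed

lemma mult_diff2: "mult D (a - b) = mult D a - mult D b"
  by (simp add: mult_alt frag_extend_diff)

lemma bim_fext: "bim u v (frag_extend (\<lambda>(x, y). frag_of (f x y, g x y)) D) = frag_extend (\<lambda>(x, y). frag_of (f x y * u, g x y * v)) D"
  unfolding bim_def fext_comp by (rule frag_extend_eq) auto

context ctx
begin

lemma LT: assumes "z \<in> nullA s t" shows "mult (\<Delta> x) z \<in> nullA s t"
  unfolding mult_alt
proof (rule tnull_map[OF subgrp_nullA])
  show "z \<in> tnull UNIV (+) UNIV (+) UNIV (\<lambda>x a. t a * x) (\<lambda>a y. s a * y)"
    using assms by (simp add: nullA_def)
next
  fix m m' n :: 'h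
  show "(case (m + m', n) of (y1, y2) \<Rightarrow> frag_extend (\<lambda>(x1, x2). frag_of (x1 * y1, x2 * y2)) (\<Delta> x)) -
         (case (m, n) of (y1, y2) \<Rightarrow> frag_extend (\<lambda>(x1, x2). frag_of (x1 * y1, x2 * y2)) (\<Delta> x)) -
         (case (m', n) of (y1, y2) \<Rightarrow> frag_extend (\<lambda>(x1, x2). frag_of (x1 * y1, x2 * y2)) (\<Delta> x)) \<in> nullA s t"
    by (simp, rule ext_in_diff3[OF subgrp_nullA]) (auto simp: split_def distrib_left nullA_addl)
next
  fix m n n' :: 'h
  show "(case (m, n + n') of (y1, y2) \<Rightarrow> frag_extend (\<lambda>(x1, x2). frag_of (x1 * y1, x2 * y2)) (\<Delta> x)) -
         (case (m, n) of (y1, y2) \<Rightarrow> frag_extend (\<lambda>(x1, x2). frag_of (x1 * y1, x2 * y2)) (\<Delta> x)) -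
         (case (m, n') of (y1, y2) \<Rightarrow> frag_extend (\<lambda>(x1, x2). frag_of (x1 * y1, x2 * y2)) (\<Delta> x)) \<in> nullA s t"
    by (simp, rule ext_in_diff3[OF subgrp_nullA]) (auto simp: split_def distrib_left nullA_addr)
next
  fix m n :: 'h and r :: 'a
  have "bim m n (frag_extend (\<lambda>(x, y). frag_of (x * t r, y)) (\<Delta> x)
          - frag_extend (\<lambda>(x, y). frag_of (x, y * s r)) (\<Delta> x)) \<in> nullA s t"
    by (rule bim_nullA[OF tak])
  then show "(case (t r * m, n) of (y1, y2) \<Rightarrow> frag_extend (\<lambda>(x1, x2). frag_of (x1 * y1, x2 * y2)) (\<Delta> x)) -
         (case (m, s r * n) of (y1, y2) \<Rightarrow> frag_extend (\<lambda>(x1, x2). frag_of (x1 * y1, x2 * y2)) (\<Delta> x)) \<in> nullA s t"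
    by (simp add: bim_diff bim_fext mult.assoc)
qed

end


lemma canmap_alt: "canmap \<Delta> N z = frag_extend (\<lambda>(x, y). pmap N (rm y (\<Delta> x))) z"
  unfolding canmap_def by (rule frag_extend_eq) (auto simp: pmap_def rm_def fext_comp split_def)

lemma pmap_rm_fext: "pmap N (rm Y (frag_extend (\<lambda>(x, y). frag_of (f x y, g x y)) D))
   = frag_extend (\<lambda>(x, y). frag_of (qproj N (f x y), g x y * Y)) D"
  unfolding pmap_def rm_def fext_comp by (rule frag_extend_eq) auto

context ctx
begin

lemma part1_bal:
  assumes b: "b \<in> B"
  shows "pmap N (rm n (\<Delta> (m * b))) - pmap N (rm (b * n) (\<Delta> m)) \<in> nullQ s t N"
proof -
  have Q: "subgrp (nullQ s t N)" by (rule subgrp_nullQ)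
  have s1: "\<Delta> (m * b) - mult (\<Delta> m) (\<delta> b) \<in> nullA s t"
  proof -
    have "\<Delta> (m * b) - mult (\<Delta> m) (\<Delta> b) \<in> nullA s t" using D_mult[of m b] by (simp add: mult_def)
    moreover have "mult (\<Delta> m) (\<Delta> b) - mult (\<Delta> m) (\<delta> b) \<in> nullA s t"
      using LT[OF subgrp_sym[OF subgrp_nullA d_D[OF b]], of m] by (simp add: mult_diff2)
    ultimately show ?thesis by (rule subgrp_trans[OF subgrp_nullA])
  qed
  have e1: "pmap N (rm n (\<Delta> (m * b))) - pmap N (rm n (mult (\<Delta> m) (\<delta> b))) \<in> nullQ s t N"
    using pmap_nullQ[OF rm_nullA[OF s1, of n]] by (simp add: rm_diff pmap_diff)
  have e2: "pmap N (rm n (mult (\<Delta> m) (\<delta> b))) =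
     frag_extend (\<lambda>(x1, x2). frag_extend (\<lambda>(b0, b1). frag_of (\<pi> (x1 * b0), x2 * b1 * n)) (\<delta> b)) (\<Delta> m)"
    unfolding pmap_def rm_def mult_def fext_comp
    by (rule frag_extend_eq) (auto simp: fext_comp split_def)
  have e3: "\<dots> = frag_extend (\<lambda>(x1, x2). frag_extend (\<lambda>(b0, b1). frag_of (\<pi> (x1 * t (\<epsilon> b0)), x2 * b1 * n)) (\<delta> b)) (\<Delta> m)"
  proof (rule frag_extend_eq, clarsimp, rule frag_extend_eq, clarsimp)
    fix x1 b0 b1 assume "(b0, b1) \<in> Poly_Mapping.keys (\<delta> b)"
    then have b0: "b0 \<in> B" using d_keys[OF b] by auto
    have "b0 - t (\<epsilon> b0) \<in> B" by (rule B_diff[OF b0 B_t])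
    moreover have "\<epsilon> (b0 - t (\<epsilon> b0)) = 0" by (simp add: eps_diff eps_t)
    ultimately have "x1 * (b0 - t (\<epsilon> b0)) \<in> N" by (rule N_gen)
    then have "\<pi> (x1 * b0) = \<pi> (x1 * t (\<epsilon> b0))" by (intro pi_eq) (simp add: algebra_simps)
    then show "frag_of (\<pi> (x1 * b0), x2 * b1 * n) = frag_of (\<pi> (x1 * t (\<epsilon> b0)), x2 * b1 * n)" for x2
      by simp
  qed
  have e4: "\<dots> = frag_extend (\<lambda>(b0, b1). frag_extend (\<lambda>(x1, x2). frag_of (\<pi> (x1 * t (\<epsilon> b0)), x2 * b1 * n)) (\<Delta> m)) (\<delta> b)"
    by (rule fext_swap2)
  have e5: "frag_extend (\<lambda>(b0, b1). frag_extend (\<lambda>(x1, x2). frag_of (\<pi> (x1 * t (\<epsilon> b0)), x2 * b1 * n)) (\<Delta> m)) (\<delta> b)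
      - frag_extend (\<lambda>(b0, b1). frag_extend (\<lambda>(x1, x2). frag_of (\<pi> x1, x2 * (s (\<epsilon> b0) * b1 * n))) (\<Delta> m)) (\<delta> b)
      \<in> nullQ s t N"
  proof (rule ext_in_diff[OF Q], clarsimp)
    fix b0 b1
    have "pmap N (rm (b1 * n) (frag_extend (\<lambda>(x, y). frag_of (x * t (\<epsilon> b0), y)) (\<Delta> m)
          - frag_extend (\<lambda>(x, y). frag_of (x, y * s (\<epsilon> b0))) (\<Delta> m))) \<in> nullQ s t N"
      by (rule pmap_nullQ[OF rm_nullA[OF tak]])
    then show "frag_extend (\<lambda>(x1, x2). frag_of (\<pi> (x1 * t (\<epsilon> b0)), x2 * b1 * n)) (\<Delta> m) -
           frag_extend (\<lambda>(x1, x2). frag_of (\<pi> x1, x2 * (s (\<epsilon> b0) * b1 * n))) (\<Delta> m) \<in> nullQ s t N"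
      by (simp add: rm_diff pmap_diff pmap_rm_fext mult.assoc)
  qed
  have e6: "frag_extend (\<lambda>(b0, b1). frag_extend (\<lambda>(x1, x2). frag_of (\<pi> x1, x2 * (s (\<epsilon> b0) * b1 * n))) (\<Delta> m)) (\<delta> b)
     = frag_extend (\<lambda>(x1, x2). frag_extend (\<lambda>(b0, b1). frag_of (\<pi> x1, x2 * (s (\<epsilon> b0) * b1 * n))) (\<delta> b)) (\<Delta> m)"
    by (rule fext_swap2[symmetric])
  have fs: "fsum (\<lambda>(b0, b1). s (\<epsilon> b0) * b1) (\<delta> b) = b"
  proof -
    have "fsum (\<lambda>(b0, b1). s (\<epsilon> b0) * b1) (\<delta> b - \<Delta> b) = 0" by (rule fsum_nullA[OF d_D[OF b]])
    then show ?thesis by (simp add: fsum_diff cu)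
  qed
  have e7: "frag_extend (\<lambda>(x1, x2). frag_extend (\<lambda>(b0, b1). frag_of (\<pi> x1, x2 * (s (\<epsilon> b0) * b1 * n))) (\<delta> b)) (\<Delta> m)
     - frag_extend (\<lambda>(x1, x2). frag_of (\<pi> x1, x2 * (b * n))) (\<Delta> m) \<in> nullQ s t N"
  proof (rule ext_in_diff[OF Q], clarsimp)
    fix x1 x2
    have "frag_extend (\<lambda>p. frag_of (\<pi> x1, (\<lambda>(b0, b1). x2 * (s (\<epsilon> b0) * b1 * n)) p)) (\<delta> b)
       - frag_of (\<pi> x1, fsum (\<lambda>(b0, b1). x2 * (s (\<epsilon> b0) * b1 * n)) (\<delta> b)) \<in> nullQ s t N"
      unfolding nullQ_def by (rule lin2) simp
    moreover have "fsum (\<lambda>(b0, b1). x2 * (s (\<epsilon> b0) * b1 * n)) (\<delta> b) = x2 * (b * n)"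
    proof -
      have "(\<lambda>(b0, b1). x2 * (s (\<epsilon> b0) * b1 * n)) = (\<lambda>p. x2 * ((\<lambda>(b0, b1). s (\<epsilon> b0) * b1) p * n))"
        by (auto simp: fun_eq_iff)
      then show ?thesis by (simp add: fsum_mult_left fsum_mult_right fs)
    qed
    moreover have "frag_extend (\<lambda>p. frag_of (\<pi> x1, (\<lambda>(b0, b1). x2 * (s (\<epsilon> b0) * b1 * n)) p)) (\<delta> b)
        = frag_extend (\<lambda>(b0, b1). frag_of (\<pi> x1, x2 * (s (\<epsilon> b0) * b1 * n))) (\<delta> b)"
      by (simp add: split_def)
    ultimately show "frag_extend (\<lambda>(b0, b1). frag_of (\<pi> x1, x2 * (s (\<epsilon> b0) * b1 * n))) (\<delta> b) -
           frag_of (\<pi> x1, x2 * (b * n)) \<in> nullQ s t N" by simp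
  qed
  have e8: "frag_extend (\<lambda>(x1, x2). frag_of (\<pi> x1, x2 * (b * n))) (\<Delta> m) = pmap N (rm (b * n) (\<Delta> m))"
    unfolding pmap_def rm_def fext_comp by (rule frag_extend_eq) auto
  show ?thesis
    by (rule subgrp_trans[OF Q e1]) (metis (no_types, lifting) e2 e3 e4 e5 e6 e7 e8 Q subgrp_trans)
qed

lemma part1:
  assumes "z \<in> nullB B" shows "canmap \<Delta> N z \<in> nullQ s t N"
  unfolding canmap_alt
proof (rule tnull_map[OF subgrp_nullQ])
  show "z \<in> tnull UNIV (+) UNIV (+) B (*) (*)" using assms by (simp add: nullB_def)
next
  fix m m' n :: 'h
  have "pmap N (rm n (\<Delta> (m + m') - \<Delta> m - \<Delta> m')) \<in> nullQ s t N"
    by (rule pmap_nullQ[OF rm_nullA[OF D_add]])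
  then show "(case (m + m', n) of (x, y) \<Rightarrow> pmap N (rm y (\<Delta> x))) - (case (m, n) of (x, y) \<Rightarrow> pmap N (rm y (\<Delta> x)))
     - (case (m', n) of (x, y) \<Rightarrow> pmap N (rm y (\<Delta> x))) \<in> nullQ s t N"
    by (simp add: rm_diff pmap_diff)
next
  fix m n n' :: 'h
  have "rm (n + n') (\<Delta> m) - rm n (\<Delta> m) - rm n' (\<Delta> m) \<in> nullA s t"
    unfolding rm_def by (rule ext_in_diff3[OF subgrp_nullA]) (auto simp: distrib_left nullA_addr)
  from pmap_nullQ[OF this]
  show "(case (m, n + n') of (x, y) \<Rightarrow> pmap N (rm y (\<Delta> x))) - (case (m, n) of (x, y) \<Rightarrow> pmap N (rm y (\<Delta> x)))
     - (case (m, n') of (x, y) \<Rightarrow> pmap N (rm y (\<Delta> x))) \<in> nullQ s t N"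
    by (simp add: pmap_diff)
next
  fix m n r :: 'h assume "r \<in> B"
  then show "(case (m * r, n) of (x, y) \<Rightarrow> pmap N (rm y (\<Delta> x))) - (case (m, r * n) of (x, y) \<Rightarrow> pmap N (rm y (\<Delta> x)))
     \<in> nullQ s t N"
    using part1_bal by simp
qed

end


definition gam :: "('h::ring_1 \<Rightarrow> ('h \<times> 'h \<Rightarrow>\<^sub>0 int)) \<Rightarrow> ('a \<Rightarrow> 'h) \<Rightarrow> ('a \<Rightarrow> 'h) \<Rightarrow> 'h \<Rightarrow> ('h \<times> 'h \<Rightarrow>\<^sub>0 int)" where
  "gam \<Delta> s t x = (SOME z. beta \<Delta> z - frag_of (x, 1) \<in> nullA s t)"

definition rep :: "'h set \<Rightarrow> 'h" where "rep C = (SOME x. x \<in> C)"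

definition Phi :: "('h::ring_1 \<Rightarrow> ('h \<times> 'h \<Rightarrow>\<^sub>0 int)) \<Rightarrow> ('a \<Rightarrow> 'h) \<Rightarrow> ('a \<Rightarrow> 'h) \<Rightarrow> ('h set \<times> 'h \<Rightarrow>\<^sub>0 int) \<Rightarrow> ('h \<times> 'h \<Rightarrow>\<^sub>0 int)" where
  "Phi \<Delta> s t w = frag_extend (\<lambda>(C, y). rm y (gam \<Delta> s t (rep C))) w"

definition prd :: "('h::ring_1 \<times> 'h \<Rightarrow>\<^sub>0 int) \<Rightarrow> ('h \<times> 'h \<Rightarrow>\<^sub>0 int) \<Rightarrow> ('h \<times> 'h \<Rightarrow>\<^sub>0 int)" where
  "prd z w = frag_extend (\<lambda>(p, q). frag_extend (\<lambda>(c, d). frag_of (p * c, d * q)) w) z"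

lemma beta_alt: "beta \<Delta> z = frag_extend (\<lambda>(x, y). rm y (\<Delta> x)) z"
  unfolding beta_def rm_def by (rule frag_extend_eq) (auto simp: split_def)

lemma beta_diff: "beta \<Delta> (a - b) = beta \<Delta> a - beta \<Delta> b"
  by (simp add: beta_def frag_extend_diff)

lemma beta_of[simp]: "beta \<Delta> (frag_of (x, y)) = rm y (\<Delta> x)"
  by (simp add: beta_alt)

lemma beta_fext: "beta \<Delta> (frag_extend g X) = frag_extend (\<lambda>p. beta \<Delta> (g p)) X"
  unfolding beta_def by (rule fext_comp)

lemma rm_fext: "rm y (frag_extend g X) = frag_extend (\<lambda>p. rm y (g p)) X"
  unfolding rm_def by (rule fext_comp)

lemma beta_rm: "beta \<Delta> (rm y z) = rm y (beta \<Delta> z)"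
  unfolding rm_def[of y z] beta_fext
  by (simp add: beta_alt rm_fext rm_rm split_def)

lemma rm_zero[simp]: "rm v 0 = 0" by (simp add: rm_def)
lemma mult_zero[simp]: "mult D 0 = 0" by (simp add: mult_alt)

lemma rm_one: "rm 1 z = z"
  unfolding rm_def by (subst (2) frag_expansion) (rule frag_extend_eq, auto)

lemma rm_mult: "rm Y (mult D z) = mult D (rm Y z)"
  unfolding mult_def rm_fext
  by (rule frag_extend_eq) (auto simp: rm_def fext_comp mult.assoc split_def)

lemma canmap_pmap: "canmap \<Delta> N z = pmap N (beta \<Delta> z)"
  unfolding canmap_alt beta_alt pmap_def fext_comp by (rule frag_extend_eq) auto

lemma canmap_fext: "canmap \<Delta> N (frag_extend g X) = frag_extend (\<lambda>p. canmap \<Delta> N (g p)) X"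
  unfolding canmap_def by (rule fext_comp)

lemma subgrp_combo2: "subgrp T \<Longrightarrow> a - a' \<in> T \<Longrightarrow> b - b' \<in> T \<Longrightarrow> a' - b' \<in> T \<Longrightarrow> a - b \<in> T"
proof -
  assume T: "subgrp T" and h: "a - a' \<in> T" "b - b' \<in> T" "a' - b' \<in> T"
  have "a - b = ((a - a') - (b - b')) + (a' - b')" by simp
  then show ?thesis using h T by (metis subgrp_add subgrp_diff)
qed

lemma subgrp_combo3: "subgrp T \<Longrightarrow> a - a' \<in> T \<Longrightarrow> b - b' \<in> T \<Longrightarrow> c - c' \<in> T \<Longrightarrow> a' - b' - c' \<in> T \<Longrightarrow> a - b - c \<in> T"
proof -
  assume T: "subgrp T" and h: "a - a' \<in> T" "b - b' \<in> T" "c - c' \<in> T" "a' - b' - c' \<in> T"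
  have "a - b - c = ((a - a') - (b - b') - (c - c')) + (a' - b' - c')" by simp
  then show ?thesis using h T by (metis subgrp_add subgrp_diff)
qed

context ctx
begin

abbreviation "\<gamma> \<equiv> gam \<Delta> s t"

lemma gam: "beta \<Delta> (\<gamma> x) - frag_of (x, 1) \<in> nullA s t"
  unfolding gam_def using beta_surj[of "frag_of (x, 1)"] by (rule someI_ex)

lemma nullA_of_zero1: "frag_of (0, n) \<in> nullA s t"
proof -
  have "frag_of (0 + 0, n) - frag_of (0, n) - frag_of (0, n) \<in> nullA s t" by (rule nullA_addl)
  then have "- frag_of (0, n) \<in> nullA s t" by simp
  then show ?thesis using subgrp_neg[OF subgrp_nullA] by fastforce
qed

lemma gam_add: "\<gamma> (x + x') - \<gamma> x - \<gamma> x' \<in> nullAo t"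
proof (rule beta_inj)
  have "beta \<Delta> (\<gamma> (x + x')) - beta \<Delta> (\<gamma> x) - beta \<Delta> (\<gamma> x') \<in> nullA s t"
    by (rule subgrp_combo3[OF subgrp_nullA gam gam gam nullA_addl])
  then show "beta \<Delta> (\<gamma> (x + x') - \<gamma> x - \<gamma> x') \<in> nullA s t" by (simp add: beta_diff)
qed

lemma gam_zero: "\<gamma> 0 \<in> nullAo t"
proof (rule beta_inj)
  show "beta \<Delta> (\<gamma> 0) \<in> nullA s t"
    using subgrp_add[OF subgrp_nullA gam[of 0] nullA_of_zero1[of 1]] by simp
qed

lemma fsum_cd:
  assumes w: "beta \<Delta> w - frag_of (b, 1) \<in> nullA s t"
  shows "fsum (\<lambda>(c, d). c * d) w = s (\<epsilon> b)"
proof -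
  let ?F = "\<lambda>(u, v). s (\<epsilon> u) * v"
  have "fsum ?F (beta \<Delta> w - frag_of (b, 1)) = 0" by (rule fsum_nullA[OF w])
  then have "fsum ?F (beta \<Delta> w) = s (\<epsilon> b)" by (simp add: fsum_diff)
  moreover have "fsum ?F (rm d X) = fsum ?F X * d" for d X
    unfolding rm_def fsum_ext
    by (simp add: split_def fsum_mult_right[symmetric] mult.assoc)
  ultimately show ?thesis
    unfolding beta_alt fsum_ext by (simp add: split_def cu[unfolded split_def])
qed

lemma lemD:
  assumes b: "b \<in> B" "\<epsilon> b = 0"
  shows "rm y (\<gamma> (h * b)) \<in> nullB B"
proof -
  obtain w where wk: "Poly_Mapping.keys w \<subseteq> B \<times> UNIV" and w: "beta \<Delta> w - frag_of (b, 1) \<in> nullA s t"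
    using galois[OF b(1)] by blast
  have A: "subgrp (nullA s t)" by (rule subgrp_nullA)
  have p1: "beta \<Delta> (prd z w) = frag_extend (\<lambda>(p, q). frag_extend (\<lambda>(c, d). rm (d * q) (\<Delta> (p * c))) w) z" for z
    unfolding prd_def beta_fext by (simp add: split_def beta_fext)
  have p2: "beta \<Delta> (prd z w) - frag_extend (\<lambda>(p, q). frag_extend (\<lambda>(c, d). rm (d * q) (mult (\<Delta> p) (\<Delta> c))) w) z \<in> nullA s t" for z
    unfolding p1
    by (rule ext_in_diff[OF A], clarsimp, rule ext_in_diff[OF A], clarsimp simp: rm_diff[symmetric])
      (rule rm_nullA, simp add: D_mult mult_def)
  have p3: "frag_extend (\<lambda>(c, d). rm (d * q) (mult (\<Delta> p) (\<Delta> c))) w = rm q (mult (\<Delta> p) (beta \<Delta> w))" for p q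
  proof -
    have "frag_extend (\<lambda>(c, d). rm (d * q) (mult (\<Delta> p) (\<Delta> c))) w = frag_extend (\<lambda>x. rm q (mult (\<Delta> p) ((\<lambda>(c, d). rm d (\<Delta> c)) x))) w"
      by (rule frag_extend_eq) (auto simp: rm_mult rm_rm)
    also have "\<dots> = rm q (mult (\<Delta> p) (frag_extend (\<lambda>(c, d). rm d (\<Delta> c)) w))"
      using subset_UNIV
      by (induction w rule: frag_induction) (auto simp: rm_diff mult_diff2 frag_extend_diff mult_alt)
    finally show ?thesis by (simp add: beta_alt)
  qed
  have p4: "rm q (mult (\<Delta> p) (beta \<Delta> w)) - rm q (bim b 1 (\<Delta> p)) \<in> nullA s t" for p q
  proof -
    have "mult (\<Delta> p) (frag_of (b, 1)) = bim b 1 (\<Delta> p)"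
      unfolding mult_def bim_def by (rule frag_extend_eq) auto
    then show ?thesis using rm_nullA[OF LT[OF w, of p], of q] by (simp add: mult_diff2 rm_diff)
  qed
  have p5: "frag_extend (\<lambda>(p, q). rm q (bim b 1 (\<Delta> p))) z = bim b 1 (beta \<Delta> z)" for z
    unfolding beta_alt bim_def fext_comp rm_def
    by (rule frag_extend_eq) (auto simp: fext_comp split_def)
  have d1: "beta \<Delta> (prd (\<gamma> h) w) - frag_of (h * b, 1) \<in> nullA s t"
  proof -
    have "beta \<Delta> (prd (\<gamma> h) w) - bim b 1 (beta \<Delta> (\<gamma> h)) \<in> nullA s t"
      using p2[of "\<gamma> h"] unfolding p3 p5[symmetric]
      by (rule subgrp_trans[OF A]) (rule ext_in_diff[OF A], clarsimp simp: p4)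
    moreover have "bim b 1 (beta \<Delta> (\<gamma> h)) - frag_of (h * b, 1) \<in> nullA s t"
      using bim_nullA[OF gam[of h], of b 1] by (simp add: bim_diff) (simp add: bim_def)
    ultimately show ?thesis by (rule subgrp_trans[OF A])
  qed
  have d2: "\<gamma> (h * b) - prd (\<gamma> h) w \<in> nullAo t"
    by (rule beta_inj, simp add: beta_diff)
      (rule subgrp_trans[OF A gam subgrp_sym[OF A d1]])
  have cd: "fsum (\<lambda>(c, d). c * d) w = 0"
    using fsum_cd[OF w] b(2) s_zero by simp
  have d3: "rm y (prd (\<gamma> h) w) \<in> nullB B"
  proof -
    have "rm y (prd (\<gamma> h) w) = frag_extend (\<lambda>(p, q). frag_extend (\<lambda>(c, d). frag_of (p * c, d * q * y)) w) (\<gamma> h)"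
      unfolding prd_def rm_fext by (rule frag_extend_eq) (auto simp: rm_fext split_def)
    also have "\<dots> \<in> nullB B"
    proof (rule ext_in[OF subgrp_nullB], clarsimp)
      fix p q
      have "frag_extend (\<lambda>(c, d). frag_of (p * c, d * q * y)) w - frag_extend (\<lambda>(c, d). frag_of (p, c * (d * q * y))) w \<in> nullB B"
        by (rule ext_in_diff[OF subgrp_nullB], clarsimp) (use wk in \<open>auto intro: nullB_bal\<close>)
      moreover have "frag_extend (\<lambda>x. frag_of (p, (\<lambda>(c, d). c * (d * q * y)) x)) w - frag_of (p, fsum (\<lambda>(c, d). c * (d * q * y)) w) \<in> nullB B"
        unfolding nullB_def by (rule lin2) simp
      moreover have "fsum (\<lambda>(c, d). c * (d * q * y)) w = 0"
      proof -
        have "(\<lambda>(c, d). c * (d * q * y)) = (\<lambda>x. (\<lambda>(c, d). c * d) x * (q * y))" by (auto simp: fun_eq_iff mult.assoc)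
        then show ?thesis by (simp add: fsum_mult_right cd)
      qed
      moreover have "frag_of (p, 0) \<in> nullB B" unfolding nullB_def by (rule tnull_of_zero2) simp
      ultimately show "frag_extend (\<lambda>(c, d). frag_of (p * c, d * q * y)) w \<in> nullB B"
        using subgrp_nullB[of B] apply (simp add: split_def)
        by (metis (no_types, lifting) subgrp_trans subgrp_add diff_add_cancel)
    qed
    finally show ?thesis .
  qed
  have "rm y (\<gamma> (h * b) - prd (\<gamma> h) w) \<in> nullB B" by (rule rm_nullB[OF d2])
  then show ?thesis using d3 subgrp_add[OF subgrp_nullB[of B]] by (simp add: rm_diff) (metis diff_add_cancel)
qed

end


lemma subgrp_lift3: "subgrp T \<Longrightarrow> a - b - c \<in> T \<Longrightarrow> c \<in> T \<Longrightarrow> b \<in> T \<Longrightarrow> a \<in> T"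
proof -
  assume T: "subgrp T" and h: "a - b - c \<in> T" "c \<in> T" "b \<in> T"
  have "a = ((a - b - c) + c) + b" by simp
  then show ?thesis using T h subgrp_add by metis
qed

lemma subgrp_lift2: "subgrp T \<Longrightarrow> a - b - c \<in> T \<Longrightarrow> c \<in> T \<Longrightarrow> a - b \<in> T"
proof -
  assume T: "subgrp T" and h: "a - b - c \<in> T" "c \<in> T"
  have "a - b = (a - b - c) + c" by simp
  then show ?thesis using T h subgrp_add by metis
qed

context ctx
begin

lemma K: assumes "n \<in> N" shows "rm y (\<gamma> n) \<in> nullB B"
proof (rule N_induct[OF assms, where P="\<lambda>n. rm y (\<gamma> n) \<in> nullB B"])
  show "rm y (\<gamma> 0) \<in> nullB B" by (rule rm_nullB[OF gam_zero])
next
  fix x h b assume IH: "rm y (\<gamma> x) \<in> nullB B" and b: "b \<in> B" "\<epsilon> b = 0"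
  have "rm y (\<gamma> (x + h * b) - \<gamma> x - \<gamma> (h * b)) \<in> nullB B" by (rule rm_nullB[OF gam_add])
  then have "rm y (\<gamma> (x + h * b)) - rm y (\<gamma> x) - rm y (\<gamma> (h * b)) \<in> nullB B" by (simp add: rm_diff)
  moreover have "rm y (\<gamma> (h * b)) \<in> nullB B" by (rule lemD[OF b])
  ultimately show "rm y (\<gamma> (x + h * b)) \<in> nullB B" using IH by (rule subgrp_lift3[OF subgrp_nullB])
qed

lemma rep_mem: "rep (\<pi> x) \<in> \<pi> x"
  unfolding rep_def using pi_mem by (rule someI)

lemma Phi1: "rm y (\<gamma> (rep (\<pi> x))) - rm y (\<gamma> x) \<in> nullB B"
proof -
  let ?r = "rep (\<pi> x)"
  have rx: "?r - x \<in> N" using rep_mem by (simp add: qproj_def)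
  have "rm y (\<gamma> (x + (?r - x)) - \<gamma> x - \<gamma> (?r - x)) \<in> nullB B" by (rule rm_nullB[OF gam_add])
  then have "rm y (\<gamma> ?r) - rm y (\<gamma> x) - rm y (\<gamma> (?r - x)) \<in> nullB B" by (simp add: rm_diff)
  moreover have "rm y (\<gamma> (?r - x)) \<in> nullB B" by (rule K[OF rx])
  ultimately show ?thesis by (rule subgrp_lift2[OF subgrp_nullB])
qed

lemma Phi_nullQ: assumes "z \<in> nullQ s t N" shows "Phi \<Delta> s t z \<in> nullB B"
  unfolding Phi_def
proof (rule tnull_map[OF subgrp_nullB])
  show "z \<in> tnull (range \<pi>) (\<lambda>C D. \<Union>x\<in>C. \<Union>y\<in>D. \<pi> (x + y)) UNIV (+) UNIV (\<lambda>C a. \<Union>x\<in>C. \<pi> (t a * x)) (\<lambda>a y. s a * y)"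
    using assms by (simp add: nullQ_def)
next
  fix m m' n assume "m \<in> range \<pi>" "m' \<in> range \<pi>"
  then obtain x x' where m: "m = \<pi> x" "m' = \<pi> x'" by blast
  have "rm n (\<gamma> (rep (\<pi> (x + x')))) - rm n (\<gamma> (rep (\<pi> x))) - rm n (\<gamma> (rep (\<pi> x')))  \<in> nullB B"
    by (rule subgrp_combo3[OF subgrp_nullB Phi1 Phi1 Phi1])
      (simp add: rm_nullB[OF gam_add, simplified rm_diff])
  then show "(case ((\<Union>x\<in>m. \<Union>y\<in>m'. \<pi> (x + y)), n) of (C, y) \<Rightarrow> rm y (\<gamma> (rep C))) -
         (case (m, n) of (C, y) \<Rightarrow> rm y (\<gamma> (rep C))) - (case (m', n) of (C, y) \<Rightarrow> rm y (\<gamma> (rep C))) \<in> nullB B"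
    by (simp add: m pi_addM)
next
  fix m n n'
  show "(case (m, n + n') of (C, y) \<Rightarrow> rm y (\<gamma> (rep C))) - (case (m, n) of (C, y) \<Rightarrow> rm y (\<gamma> (rep C))) -
         (case (m, n') of (C, y) \<Rightarrow> rm y (\<gamma> (rep C))) \<in> nullB B"
    unfolding rm_def by (simp, rule ext_in_diff3[OF subgrp_nullB]) (auto simp: distrib_left nullB_addr)
next
  fix m r n assume "m \<in> range \<pi>"
  then obtain x where m: "m = \<pi> x" by blast
  have g: "\<gamma> (t r * x) - rm (s r) (\<gamma> x) \<in> nullAo t"
  proof (rule beta_inj)
    have "beta \<Delta> (\<gamma> (t r * x)) - beta \<Delta> (rm (s r) (\<gamma> x)) \<in> nullA s t"
    proof (rule subgrp_combo2[OF subgrp_nullA gam])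
      show "beta \<Delta> (rm (s r) (\<gamma> x)) - frag_of (x, s r) \<in> nullA s t"
        using rm_nullA[OF gam[of x], of "s r"] by (simp add: beta_rm rm_diff)
      show "frag_of (t r * x, 1) - frag_of (x, s r) \<in> nullA s t"
        using nullA_bal[where a=r and m=x and n=1] by simp
    qed
    then show "beta \<Delta> (\<gamma> (t r * x) - rm (s r) (\<gamma> x)) \<in> nullA s t" by (simp add: beta_diff)
  qed
  have "rm n (\<gamma> (rep (\<pi> (t r * x)))) - rm (s r * n) (\<gamma> (rep (\<pi> x))) \<in> nullB B"
    by (rule subgrp_combo2[OF subgrp_nullB Phi1 Phi1])
      (use rm_nullB[OF g, of n] in \<open>simp add: rm_diff rm_rm\<close>)
  then show "(case ((\<Union>x\<in>m. \<pi> (t r * x)), n) of (C, y) \<Rightarrow> rm y (\<gamma> (rep C))) - (case (m, s r * n) of (C, y) \<Rightarrow> rm y (\<gamma> (rep C)))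
      \<in> nullB B"
    by (simp add: m pi_ract)
qed

lemma Phi_canmap: "Phi \<Delta> s t (canmap \<Delta> N z) - z \<in> nullB B"
proof -
  have B: "subgrp (nullB B)" by (rule subgrp_nullB)
  have "Phi \<Delta> s t (canmap \<Delta> N z) = frag_extend (\<lambda>(x, y). Phi \<Delta> s t (pmap N (rm y (\<Delta> x)))) z"
    unfolding canmap_alt Phi_def fext_comp by (rule frag_extend_eq) auto
  moreover have "z = frag_extend frag_of z" by (rule frag_expansion)
  moreover have "frag_extend (\<lambda>(x, y). Phi \<Delta> s t (pmap N (rm y (\<Delta> x)))) z - frag_extend frag_of z \<in> nullB B"
  proof (rule ext_in_diff[OF B], clarsimp)
    fix x y
    have e1: "Phi \<Delta> s t (pmap N (rm y (\<Delta> x))) = frag_extend (\<lambda>(u, v). rm (v * y) (\<gamma> (rep (\<pi> u)))) (\<Delta> x)"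
      unfolding Phi_def pmap_def rm_def[of y] fext_comp by (rule frag_extend_eq) auto
    have e2: "frag_extend (\<lambda>(u, v). rm (v * y) (\<gamma> (rep (\<pi> u)))) (\<Delta> x)
            - frag_extend (\<lambda>(u, v). rm (v * y) (\<gamma> u)) (\<Delta> x) \<in> nullB B"
      by (rule ext_in_diff[OF B], clarsimp simp: Phi1)
    let ?E = "frag_extend (\<lambda>(u, v). rm v (\<gamma> u)) (\<Delta> x)"
    have e3: "frag_extend (\<lambda>(u, v). rm (v * y) (\<gamma> u)) (\<Delta> x) = rm y ?E"
      unfolding rm_fext by (rule frag_extend_eq) (auto simp: rm_rm)
    have e4: "?E - frag_of (x, 1) \<in> nullAo t"
    proof (rule beta_inj)
      have "beta \<Delta> ?E = frag_extend (\<lambda>(u, v). rm v (beta \<Delta> (\<gamma> u))) (\<Delta> x)"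
        unfolding beta_fext by (rule frag_extend_eq) (auto simp: beta_rm)
      moreover have "frag_extend (\<lambda>(u, v). rm v (beta \<Delta> (\<gamma> u))) (\<Delta> x)
         - frag_extend (\<lambda>(u, v). rm v (frag_of (u, 1))) (\<Delta> x) \<in> nullA s t"
        by (rule ext_in_diff[OF subgrp_nullA], clarsimp)
          (use rm_nullA[OF gam] in \<open>simp add: rm_diff\<close>)
      moreover have "frag_extend (\<lambda>(u, v). rm v (frag_of (u, 1))) (\<Delta> x) = \<Delta> x"
        by (subst (2) frag_expansion) (rule frag_extend_eq, auto)
      moreover have "beta \<Delta> (frag_of (x, 1)) = \<Delta> x" by (simp add: rm_one)
      ultimately show "beta \<Delta> (?E - frag_of (x, 1)) \<in> nullA s t" by (simp add: beta_diff)
    qed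
    have "rm y (?E - frag_of (x, 1)) \<in> nullB B" by (rule rm_nullB[OF e4])
    then have e5: "rm y ?E - frag_of (x, y) \<in> nullB B" by (simp add: rm_diff)
    show "Phi \<Delta> s t (pmap N (rm y (\<Delta> x))) - frag_of (x, y) \<in> nullB B"
      unfolding e1 using subgrp_trans[OF B e2] e3 e5 by simp
  qed
  ultimately show ?thesis by simp
qed

lemma part2: assumes "canmap \<Delta> N z \<in> nullQ s t N" shows "z \<in> nullB B"
proof -
  have "Phi \<Delta> s t (canmap \<Delta> N z) \<in> nullB B" by (rule Phi_nullQ[OF assms])
  from subgrp_diff[OF subgrp_nullB this Phi_canmap[of z]] show ?thesis by simp
qed

lemma part3:
  assumes "Poly_Mapping.keys w \<subseteq> range \<pi> \<times> UNIV"
  shows "\<exists>z. canmap \<Delta> N z - w \<in> nullQ s t N"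
proof (intro exI)
  have "canmap \<Delta> N (Phi \<Delta> s t w) = frag_extend (\<lambda>(C, y). canmap \<Delta> N (rm y (\<gamma> (rep C)))) w"
    unfolding Phi_def canmap_fext by (rule frag_extend_eq) auto
  moreover have "w = frag_extend frag_of w" by (rule frag_expansion)
  moreover have "frag_extend (\<lambda>(C, y). canmap \<Delta> N (rm y (\<gamma> (rep C)))) w - frag_extend frag_of w \<in> nullQ s t N"
  proof (rule ext_in_diff[OF subgrp_nullQ], clarsimp)
    fix C y assume "(C, y) \<in> Poly_Mapping.keys w"
    then obtain x where C: "C = \<pi> x" using assms by blast
    let ?r = "rep (\<pi> x)"
    have "pmap N (rm y (beta \<Delta> (\<gamma> ?r) - frag_of (?r, 1))) \<in> nullQ s t N"
      by (rule pmap_nullQ[OF rm_nullA[OF gam]])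
    moreover have "\<pi> ?r = \<pi> x" by (rule pi_eq_mem[OF rep_mem])
    ultimately show "canmap \<Delta> N (rm y (\<gamma> (rep C))) - frag_of (C, y) \<in> nullQ s t N"
      by (simp add: C canmap_pmap beta_rm rm_diff pmap_diff pmap_def frag_extend_diff)
  qed
  ultimately show "canmap \<Delta> N (Phi \<Delta> s t w) - w \<in> nullQ s t N" by simp
qed

end

theorem lemma2p12:
  fixes \<eta>A :: "'k::field \<Rightarrow> 'a::ring_1" and \<eta>H :: "'k \<Rightarrow> 'h::ring_1"
    and s t :: "'a \<Rightarrow> 'h" and \<Delta> :: "'h \<Rightarrow> ('h \<times> 'h \<Rightarrow>\<^sub>0 int)" and \<epsilon> :: "'h \<Rightarrow> 'a"
    and B :: "'h set" and \<delta> :: "'h \<Rightarrow> ('h \<times> 'h \<Rightarrow>\<^sub>0 int)"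
  assumes hopf: "left_hopf_algebroid \<eta>A \<eta>H s t \<Delta> \<epsilon>"
    and flat: "s_flat s"
    and comod: "comodule_subring s t \<Delta> \<epsilon> B \<delta>"
    and galois: "\<forall>b\<in>B. \<exists>w. Poly_Mapping.keys w \<subseteq> B \<times> UNIV
                        \<and> beta \<Delta> w - frag_of (b, 1) \<in> nullA s t"
  shows "(\<forall>z \<in> nullB B. canmap \<Delta> (HBplus \<epsilon> B) z \<in> nullQ s t (HBplus \<epsilon> B))
       \<and> (\<forall>z. canmap \<Delta> (HBplus \<epsilon> B) z \<in> nullQ s t (HBplus \<epsilon> B) \<longrightarrow> z \<in> nullB B)
       \<and> (\<forall>w. Poly_Mapping.keys w \<subseteq> qproj (HBplus \<epsilon> B) ` UNIV \<times> UNIV \<longrightarrow>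
              (\<exists>z. canmap \<Delta> (HBplus \<epsilon> B) z - w \<in> nullQ s t (HBplus \<epsilon> B)))"
proof -
  interpret ctx s t \<Delta> \<epsilon> B \<delta>
  proof
    show "\<And>a b. s (a + b) = s a + s b" "\<And>a b. s (a * b) = s a * s b" "s 1 = 1"
      "\<And>x y. \<epsilon> (x + y) = \<epsilon> x + \<epsilon> y" "\<And>a b h. \<epsilon> (s a * t b * h) = a * \<epsilon> h * b" "\<epsilon> 1 = 1"
      "\<And>x y. \<Delta> (x + y) - \<Delta> x - \<Delta> y \<in> nullA s t"
      "\<And>h. fsum (\<lambda>(x, y). s (\<epsilon> x) * y) (\<Delta> h) = h"
      "\<And>h a. frag_extend (\<lambda>(x, y). frag_of (x * t a, y)) (\<Delta> h)
          - frag_extend (\<lambda>(x, y). frag_of (x, y * s a)) (\<Delta> h) \<in> nullA s t"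
      "\<And>x y. \<Delta> (x * y)
          - frag_extend (\<lambda>(x1, x2). frag_extend (\<lambda>(y1, y2). frag_of (x1 * y1, x2 * y2)) (\<Delta> y)) (\<Delta> x)
          \<in> nullA s t"
      "\<And>z. beta \<Delta> z \<in> nullA s t \<Longrightarrow> z \<in> nullAo t"
      "\<And>w. \<exists>z. beta \<Delta> z - w \<in> nullA s t"
      using hopf unfolding left_hopf_algebroid_def left_bialgebroid_def by auto
    show "\<And>x y. x \<in> B \<Longrightarrow> y \<in> B \<Longrightarrow> x + y \<in> B" "\<And>x. x \<in> B \<Longrightarrow> - x \<in> B" "\<And>a. t a \<in> B"
      "\<And>b. b \<in> B \<Longrightarrow> Poly_Mapping.keys (\<delta> b) \<subseteq> B \<times> UNIV"
      "\<And>b. b \<in> B \<Longrightarrow> \<delta> b - \<Delta> b \<in> nullA s t"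
      using comod unfolding comodule_subring_def by auto
    show "\<And>b. b \<in> B \<Longrightarrow> \<exists>w. Poly_Mapping.keys w \<subseteq> B \<times> UNIV \<and> beta \<Delta> w - frag_of (b, 1) \<in> nullA s t"
      using galois by auto
  qed
  show ?thesis using part1 part2 part3 by blast
qed

end
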